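(* For every integer $r\ge0$, \[ \sum_{n=1}^{\infty}\frac{h_n^{(r)}}{n(n+1)\cdots(n+r)}=\frac{\pi^2}{6\,r!}, \] equivalently $\sum_{n=1}^{\infty}h_n^{(r)}B(r+1,n)=\pi^2/6$.
   Context: Hyperharmonic numbers: $h_n^{(0)}=1/n$ for $n\ge1$, and for $r\ge1$, $h_n^{(r)}=\sum_{j=1}^{n}h_j^{(r-1)}$. $B(x,y)=\int_0^1t^{x-1}(1-t)^{y-1}\,dt$ is the Beta function. *)

theory Defs
  imports "HOL-Analysis.Analysis"
begin

fun hyperharmonic :: "nat \<Rightarrow> nat \<Rightarrow> real" where
  "hyperharmonic 0 n = 1 / real n"
| "hyperharmonic (Suc r) n = (\<Sum>j=1..n. hyperharmonic r j)"

definition BetaInt :: "real \<Rightarrow> real \<Rightarrow> real" where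
  "BetaInt x y = integral {0..1} (\<lambda>t. t powr (x - 1) * (1 - t) powr (y - 1))"

end

theory Submission
  imports Defs
begin

definition Q :: "nat \<Rightarrow> nat \<Rightarrow> real" where
  "Q r n = (\<Prod>k=0..r. real (n + 1 + k))"

lemma Q_pos: "Q r n > 0"
  unfolding Q_def by (intro prod_pos) auto

lemma Q_Suc: "Q (Suc r) n = Q r n * real (n + 2 + r)"
  unfolding Q_def by (simp add: prod.atLeast0_atMost_Suc)

lemma Q_shift: "Q r (Suc n) * real (n + 1) = Q (Suc r) n"
  unfolding Q_def
  by (subst prod.atLeast0_atMost_Suc_shift) (simp add: mult.commute)

lemma Q_ge: "Q r n \<ge> real (n+1) ^ (Suc r)"
proof -
  have "(\<Prod>k=0..r. real (n + 1)) \<le> Q r n"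
    unfolding Q_def by (intro prod_mono) auto
  thus ?thesis by simp
qed

lemma hh_nonneg: "hyperharmonic r n \<ge> 0"
  by (induction r arbitrary: n) (auto intro: sum_nonneg)

lemma hh_mono: "m \<le> n \<Longrightarrow> hyperharmonic (Suc r) m \<le> hyperharmonic (Suc r) n"
  by (simp, intro sum_mono2) (auto simp: hh_nonneg)

lemma hh1_harm: "hyperharmonic (Suc 0) n = harm n"
proof (induction n)
  case 0 then show ?case by (simp add: harm_altdef)
next
  case (Suc n)
  have "hyperharmonic (Suc 0) (Suc n) = hyperharmonic (Suc 0) n + 1 / real (Suc n)"
    by (simp add: sum.cl_ivl_Suc)
  then show ?case using Suc by (simp add: harm_Suc field_simps)
qed

lemma hh_bound: "hyperharmonic (Suc r) n \<le> real n ^ r * harm n"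
proof (induction r arbitrary: n)
  case 0 then show ?case using hh1_harm by simp
next
  case (Suc r)
  have "hyperharmonic (Suc (Suc r)) n = (\<Sum>j=1..n. hyperharmonic (Suc r) j)" by simp
  also have "\<dots> \<le> (\<Sum>j=1..n. real n ^ r * harm n)"
  proof (intro sum_mono)
    fix j assume j: "j \<in> {1..n}"
    have "hyperharmonic (Suc r) j \<le> real j ^ r * harm j" by (rule Suc.IH)
    also have "\<dots> \<le> real n ^ r * harm n"
      using j by (intro mult_mono power_mono harm_mono) (auto simp: harm_nonneg)
    finally show "hyperharmonic (Suc r) j \<le> real n ^ r * harm n" .
  qed
  also have "\<dots> = real n ^ Suc r * harm n" by simp
  finally show ?case .
qed

lemma harm_div_lim: "(\<lambda>N. harm N / real (N + 1)) \<longlonglongrightarrow> (0::real)"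
proof -
  obtain L where L: "(\<lambda>n. harm n - ln (real n)) \<longlonglongrightarrow> (L::real)"
    using euler_mascheroni_convergent convergent_def by blast
  have a: "(\<lambda>N. 1 / real (N + 1)) \<longlonglongrightarrow> (0::real)" by real_asymp
  have b: "(\<lambda>N. ln (real N) / real (N + 1)) \<longlonglongrightarrow> (0::real)" by real_asymp
  have "(\<lambda>N. (harm N - ln (real N)) * (1 / real (N + 1)) + ln (real N) / real (N + 1))
          \<longlonglongrightarrow> L * 0 + 0"
    by (intro tendsto_intros L a b)
  thus ?thesis by (simp add: field_simps del: of_nat_Suc)
qed

lemma boundary: "(\<lambda>N. hyperharmonic (Suc r) N / Q r N) \<longlonglongrightarrow> 0"
proof (rule real_tendsto_sandwich[OF _ _ tendsto_const harm_div_lim])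
  show "\<forall>\<^sub>F N in sequentially. 0 \<le> hyperharmonic (Suc r) N / Q r N"
    by (intro always_eventually allI divide_nonneg_pos hh_nonneg Q_pos)
  show "\<forall>\<^sub>F N in sequentially. hyperharmonic (Suc r) N / Q r N \<le> harm N / real (N + 1)"
  proof (intro always_eventually allI)
    fix N
    have q: "Q r N > 0" by (rule Q_pos)
    have "hyperharmonic (Suc r) N / Q r N \<le> real N ^ r * harm N / Q r N"
      using hh_bound q by (intro divide_right_mono) (auto intro: less_imp_le)
    also have "\<dots> \<le> real N ^ r * harm N / real (N+1) ^ Suc r"
      using Q_ge[of N r] by (intro divide_left_mono mult_nonneg_nonneg mult_pos_pos Q_pos zero_less_power) (auto simp: harm_nonneg)
    also have "\<dots> \<le> real (N+1) ^ r * harm N / real (N+1) ^ Suc r"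
      by (intro divide_right_mono mult_right_mono power_mono) (auto simp: harm_nonneg)
    also have "\<dots> = harm N / real (N+1)"
      by (simp add: field_simps del: of_nat_Suc)
    finally show "hyperharmonic (Suc r) N / Q r N \<le> harm N / real (N + 1)" .
  qed
qed

lemma abel:
  "real (r+1) * (\<Sum>n<N. hyperharmonic (Suc r) (n+1) / Q (Suc r) n)
     = (\<Sum>n<N. hyperharmonic r (n+1) / Q r n) - hyperharmonic (Suc r) N / Q r N"
proof (induction N)
  case 0 then show ?case by simp
next
  case (Suc N)
  have hs: "hyperharmonic (Suc r) (N+1) = hyperharmonic (Suc r) N + hyperharmonic r (N+1)"
    by (simp add: sum.cl_ivl_Suc)
  have q1: "Q (Suc r) N = Q r N * real (N + 2 + r)" by (rule Q_Suc)
  have q2: "Q r (Suc N) * real (N + 1) = Q (Suc r) N" by (rule Q_shift)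
  have p0: "Q r N > 0" "Q r (Suc N) > 0" by (auto intro: Q_pos)
  have key: "real (r+1) * (hyperharmonic (Suc r) (N+1) / Q (Suc r) N) =
      hyperharmonic r (N+1) / Q r N - hyperharmonic (Suc r) (Suc N) / Q r (Suc N)
      + hyperharmonic (Suc r) N / Q r N"
  proof -
    have qq: "Q r (Suc N) = Q r N * real (N + 2 + r) / real (N+1)"
      using q1 q2 by (simp add: field_simps del: of_nat_Suc)
    show ?thesis
      unfolding q1 qq using p0 hs
      apply (simp add: field_simps del: of_nat_Suc hyperharmonic.simps)
      apply (simp add: algebra_simps)
      done
  qed
  show ?case using Suc key by (simp add: distrib_left del: hyperharmonic.simps)
qed

lemma main: "(\<lambda>n. hyperharmonic r (n + 1) / Q r n) sums (pi\<^sup>2 / (6 * fact r))"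
proof (induction r)
  case 0
  have "(\<lambda>n. hyperharmonic 0 (n + 1) / Q 0 n) = (\<lambda>n. 1 / (real n + 1)\<^sup>2)"
    by (auto simp: Q_def power2_eq_square add.commute)
  then show ?case using inverse_squares_sums by (simp add: add.commute)
next
  case (Suc r)
  have lim: "(\<lambda>N. ((\<Sum>n<N. hyperharmonic r (n+1) / Q r n) - hyperharmonic (Suc r) N / Q r N)
        / real (r+1)) \<longlonglongrightarrow> (pi\<^sup>2 / (6 * fact r) - 0) / real (r+1)"
    using Suc.IH boundary[of r] unfolding sums_def by (intro tendsto_intros) auto
  have "(\<lambda>N. ((\<Sum>n<N. hyperharmonic r (n+1) / Q r n) - hyperharmonic (Suc r) N / Q r N)
        / real (r+1)) = (\<lambda>N. \<Sum>n<N. hyperharmonic (Suc r) (n+1) / Q (Suc r) n)"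
    using abel[of r] by (auto simp: field_simps simp del: of_nat_Suc hyperharmonic.simps)
  moreover have "(pi\<^sup>2 / (6 * fact r) - 0) / real (r+1) = pi\<^sup>2 / (6 * fact (Suc r))"
    by (simp add: field_simps)
  ultimately show ?case using lim unfolding sums_def by (simp only:)
qed

lemma beta_eq: "BetaInt (real r + 1) (real (n + 1)) = fact r / Q r n"
proof -
  have "BetaInt (real r + 1) (real (n + 1)) = Beta (real r + 1) (real (n + 1))"
    unfolding BetaInt_def using has_integral_Beta_real[of "real r + 1" "real (n+1)"]
    by (auto intro: integral_unique)
  also have "\<dots> = fact r * fact n / fact (n + r + 1)"
  proof -
    have "Gamma (real r + 1) = fact r" using Gamma_fact[of r] by (simp add: add.commute)
    moreover have "Gamma (real (n+1)) = fact n" using Gamma_fact[of n] by simp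
    moreover have "Gamma (real r + 1 + real (n+1)) = fact (n + r + 1)"
      using Gamma_fact[of "n + r + 1"] by (simp add: add_ac)
    ultimately show ?thesis by (simp add: Beta_def)
  qed
  also have "fact (n + r + 1) = fact n * Q r n"
  proof (induction r)
    case 0 then show ?case by (simp add: Q_def)
  next
    case (Suc r)
    have "fact (n + Suc r + 1) = (fact (n + r + 1) :: real) * real (n + 2 + r)"
      by (simp add: algebra_simps)
    then show ?case using Suc by (simp add: Q_Suc)
  qed
  finally show ?thesis by simp
qed

theorem proposition6:
  fixes r :: nat
  shows "(\<lambda>n. hyperharmonic r (n + 1) / (\<Prod>k=0..r. real (n + 1 + k)))
           sums (pi\<^sup>2 / (6 * fact r))
       \<and> (\<lambda>n. hyperharmonic r (n + 1) * BetaInt (real r + 1) (real (n + 1)))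
           sums (pi\<^sup>2 / 6)"
proof
  show "(\<lambda>n. hyperharmonic r (n + 1) / (\<Prod>k=0..r. real (n + 1 + k))) sums (pi\<^sup>2 / (6 * fact r))"
    using main[of r] by (simp add: Q_def)
  have "(\<lambda>n. fact r * (hyperharmonic r (n + 1) / Q r n)) sums (fact r * (pi\<^sup>2 / (6 * fact r)))"
    by (intro sums_mult main)
  then show "(\<lambda>n. hyperharmonic r (n + 1) * BetaInt (real r + 1) (real (n + 1))) sums (pi\<^sup>2 / 6)"
  proof -
    have "(\<lambda>n. hyperharmonic r (n + 1) * BetaInt (real r + 1) (real (n + 1)))
        = (\<lambda>n. fact r * (hyperharmonic r (n + 1) / Q r n))"
      unfolding beta_eq by (rule ext) (simp add: field_simps)
    then show ?thesis using \<open>(\<lambda>n. fact r * (hyperharmonic r (n + 1) / Q r n)) sums (fact r * (pi\<^sup>2 / (6 * fact r)))\<close>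
      by simp
  qed
qed

end
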